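(* Let $k\ge 2$ and let $K>0$, $\sigma>0$, $0<d_0<d_1$, $0<\beta\le \tfrac12$, and let $\theta$ be a positive even integer. Consider agents with positions $x_i(t)\in\mathbb{R}^n$ and velocities $v_i(t)\in\mathbb{R}^n$, $i=1,\dots,k$, evolving by $$\dot x_i=v_i,\qquad \dot v_i=\sum_{j=1}^k a_{ij}(x)(v_j-v_i)+\Lambda(v)\sum_{j\neq i} f_0(\|x_i-x_j\|^2)(x_i-x_j)+\Lambda(v)\sum_{j\ne i} f_1(\|x_i-x_j\|^2)(x_j-x_i),$$ where $$a_{ij}(x)=\frac{K}{(\sigma^2+\|x_i-x_j\|^2)^{\beta}},\quad \Lambda(v)=\Big(\frac1k\sum_{i>j}\|v_i-v_j\|^2\Big)^{1/2},\quad f_0(r)=\frac{1}{(r-d_0)^{\theta}},\quad f_1(r)=\frac{1}{(r-d_1)^{\theta}}.$$ Suppose the initial positions satisfy $d_0<\|x_i(0)-x_j(0)\|^2<d_1$ for all $i\neq j$, and let $(x(t),v(t))$ be a solution defined for all $t\ge 0$. Then the average velocity $\bar v(t)=\frac1k\sum_{i=1}^k v_i(t)$ is constant in $t$, the deviations $\|x_i(t)-\bar x(t)\|$ (with $\bar x=\frac1k\sum_i x_i$) remain bounded for $t\ge0$, $\int_0^\infty\big(\sum_{i=1}^k\|v_i(t)-\bar v\|^2\big)^{1/2}dt<\infty$, and $v_i(t)-\bar v\to 0$ as $t\to\infty$ for every $i$; i.e. all velocities converge to a common value.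
   Context: $\|\cdot\|$ is the Euclidean norm. The term $\sum_j a_{ij}(x)(v_j-v_i)$ is the alignment term, the $f_0$ term the separation term, and the $f_1$ term the cohesion term. Note $\Lambda(v)$ equals $\big(\sum_{i=1}^k\|v_i-\bar v\|^2\big)^{1/2}$. *)

theory Defs
  imports "HOL-Analysis.Analysis"
begin

definition align_weight :: "real \<Rightarrow> real \<Rightarrow> real \<Rightarrow> real ^ 'n \<Rightarrow> real ^ 'n \<Rightarrow> real" where
  "align_weight K \<sigma> \<beta> xi xj = K / (\<sigma>\<^sup>2 + (norm (xi - xj))\<^sup>2) powr \<beta>"

definition Lambda :: "('k::{finite,linorder} \<Rightarrow> real ^ 'n) \<Rightarrow> real" where
  "Lambda v = sqrt ((1 / real CARD('k)) * (\<Sum>(i, j) \<in> {(i, j). j < i}. (norm (v i - v j))\<^sup>2))"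

definition fsing :: "real \<Rightarrow> nat \<Rightarrow> real \<Rightarrow> real" where
  "fsing d \<theta> r = 1 / (r - d) ^ \<theta>"

definition avg :: "('k::finite \<Rightarrow> real ^ 'n) \<Rightarrow> real ^ 'n" where
  "avg v = (1 / real CARD('k)) *\<^sub>R (\<Sum>i\<in>UNIV. v i)"

definition flock_rhs ::
  "real \<Rightarrow> real \<Rightarrow> real \<Rightarrow> real \<Rightarrow> real \<Rightarrow> nat \<Rightarrow>
   ('k::{finite,linorder} \<Rightarrow> real ^ 'n) \<Rightarrow> ('k \<Rightarrow> real ^ 'n) \<Rightarrow> 'k \<Rightarrow> real ^ 'n" where
  "flock_rhs K \<sigma> \<beta> d0 d1 \<theta> x v i =
     (\<Sum>j\<in>UNIV. align_weight K \<sigma> \<beta> (x i) (x j) *\<^sub>R (v j - v i))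
     + Lambda v *\<^sub>R (\<Sum>j\<in>UNIV - {i}. fsing d0 \<theta> ((norm (x i - x j))\<^sup>2) *\<^sub>R (x i - x j))
     + Lambda v *\<^sub>R (\<Sum>j\<in>UNIV - {i}. fsing d1 \<theta> ((norm (x i - x j))\<^sup>2) *\<^sub>R (x j - x i))"

end

theory Submission
  imports Defs
begin


lemma sum_antisym_zero:
  fixes h :: "'k::finite \<Rightarrow> 'k \<Rightarrow> 'a::real_vector"
  assumes "\<And>i j. h j i = - h i j"
  shows "(\<Sum>i\<in>UNIV. \<Sum>j\<in>UNIV. h i j) = 0"
proof -
  let ?S = "(\<Sum>i\<in>UNIV. \<Sum>j\<in>UNIV. h i j)"
  have "?S = (\<Sum>j\<in>UNIV. \<Sum>i\<in>UNIV. h i j)" by (rule sum.swap)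
  also have "\<dots> = (\<Sum>j\<in>UNIV. \<Sum>i\<in>UNIV. - h j i)" by (intro sum.cong refl assms)
  also have "\<dots> = - ?S" by (simp add: sum_negf)
  finally have "?S = - ?S" .
  then have "2 *\<^sub>R ?S = 0" by (simp add: scaleR_2 eq_neg_iff_add_eq_0)
  then show ?thesis by simp
qed

lemma sum_antisym_inner:
  fixes h :: "'k::finite \<Rightarrow> 'k \<Rightarrow> 'a::real_inner" and w' :: "'k \<Rightarrow> 'a" 
  assumes "\<And>i j. h j i = - h i j"
  shows "(\<Sum>i\<in>UNIV. \<Sum>j\<in>UNIV. h i j \<bullet> w' i) = (1/2) * (\<Sum>i\<in>UNIV. \<Sum>j\<in>UNIV. h i j \<bullet> (w' i - w' j))"
proof -
  have "(\<Sum>i\<in>UNIV. \<Sum>j\<in>UNIV. h i j \<bullet> w' j) = (\<Sum>j\<in>UNIV. \<Sum>i\<in>UNIV. h i j \<bullet> w' j)" by (rule sum.swap)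
  also have "\<dots> = (\<Sum>j\<in>UNIV. \<Sum>i\<in>UNIV. - (h j i \<bullet> w' j))"
    by (intro sum.cong refl) (subst assms, simp)
  also have "\<dots> = - (\<Sum>i\<in>UNIV. \<Sum>j\<in>UNIV. h i j \<bullet> w' i)" by (simp add: sum_negf)
  finally have 1: "(\<Sum>i\<in>UNIV. \<Sum>j\<in>UNIV. h i j \<bullet> w' j) = - (\<Sum>i\<in>UNIV. \<Sum>j\<in>UNIV. h i j \<bullet> w' i)" .
  have "(\<Sum>i\<in>UNIV. \<Sum>j\<in>UNIV. h i j \<bullet> (w' i - w' j)) = (\<Sum>i\<in>UNIV. \<Sum>j\<in>UNIV. h i j \<bullet> w' i) - (\<Sum>i\<in>UNIV. \<Sum>j\<in>UNIV. h i j \<bullet> w' j)"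
    by (simp add: inner_diff_right sum_subtractf)
  with 1 show ?thesis by simp
qed

lemma sum_lower_half:
  fixes s :: "'k::{finite,linorder} \<Rightarrow> 'k \<Rightarrow> real"
  assumes sym: "\<And>i j. s i j = s j i" and diag: "\<And>i. s i i = 0"
  shows "(\<Sum>(i, j) \<in> {(i, j). j < i}. s i j) = (1/2) * (\<Sum>i\<in>UNIV. \<Sum>j\<in>UNIV. s i j)"
proof -
  let ?L = "{(i::'k, j). j < i}" and ?U = "{(i::'k, j). i < j}" and ?D = "{(i::'k, j). i = j}"
  have all: "(\<Sum>i\<in>UNIV. \<Sum>j\<in>UNIV. s i j) = (\<Sum>(i,j)\<in>UNIV. s i j)"
    by (simp add: sum.cartesian_product)
  have part: "(UNIV :: ('k\<times>'k) set) = ?L \<union> (?U \<union> ?D)" by auto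
  have "(\<Sum>(i,j)\<in>UNIV. s i j) = (\<Sum>(i,j)\<in>?L. s i j) + ((\<Sum>(i,j)\<in>?U. s i j) + (\<Sum>(i,j)\<in>?D. s i j))"
    apply (subst part)
    apply (subst sum.union_disjoint, simp, simp, force)
    apply (subst sum.union_disjoint, simp, simp, force)
    by simp
  moreover have "(\<Sum>(i,j)\<in>?D. s i j) = 0" by (rule sum.neutral) (auto simp: diag)
  moreover have "(\<Sum>(i,j)\<in>?U. s i j) = (\<Sum>(i,j)\<in>?L. s i j)"
  proof (rule sum.reindex_bij_witness[where i="\<lambda>(i,j). (j,i)" and j="\<lambda>(i,j). (j,i)"])
  qed (auto simp: sym)
  ultimately show ?thesis using all by simp
qed

lemma sum_sq_diff:
  fixes w :: "'k::finite \<Rightarrow> 'a::real_inner"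
  shows "(\<Sum>i\<in>UNIV. \<Sum>j\<in>UNIV. (norm (w i - w j))\<^sup>2)
       = 2 * real CARD('k) * (\<Sum>i\<in>UNIV. (norm (w i))\<^sup>2) - 2 * (norm (\<Sum>i\<in>UNIV. w i))\<^sup>2"
proof -
  have e: "\<And>i j. (norm (w i - w j))\<^sup>2 = (norm (w i))\<^sup>2 + (norm (w j))\<^sup>2 - 2 * (w i \<bullet> w j)"
    by (simp add: power2_norm_eq_inner inner_diff_left inner_diff_right inner_commute)
  have "(norm (\<Sum>i\<in>UNIV. w i))\<^sup>2 = (\<Sum>i\<in>UNIV. \<Sum>j\<in>UNIV. w i \<bullet> w j)"
    unfolding power2_norm_eq_inner inner_sum_left inner_sum_right by (rule sum.swap)
  moreover have "(\<Sum>i\<in>UNIV. \<Sum>j\<in>UNIV. (norm (w i - w j))\<^sup>2)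
     = (\<Sum>i\<in>UNIV. \<Sum>j\<in>(UNIV::'k set). (norm (w i))\<^sup>2) + (\<Sum>i\<in>(UNIV::'k set). \<Sum>j\<in>UNIV. (norm (w j))\<^sup>2)
       - 2 * (\<Sum>i\<in>UNIV. \<Sum>j\<in>UNIV. w i \<bullet> w j)"
    unfolding e by (simp add: sum_subtractf sum.distrib sum_distrib_left)
  moreover have "(\<Sum>i\<in>UNIV. \<Sum>j\<in>(UNIV::'k set). (norm (w i))\<^sup>2) = real CARD('k) * (\<Sum>i\<in>UNIV. (norm (w i))\<^sup>2)"
    by (simp add: sum_distrib_left)
  moreover have "(\<Sum>i\<in>(UNIV::'k set). \<Sum>j\<in>UNIV. (norm (w j))\<^sup>2) = real CARD('k) * (\<Sum>i\<in>UNIV. (norm (w i))\<^sup>2)"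
    by (simp add: sum_distrib_left)
  ultimately show ?thesis by simp
qed




lemma sum_minus_self:
  fixes f :: "'k::finite \<Rightarrow> 'a::comm_monoid_add"
  shows "f i = 0 \<Longrightarrow> (\<Sum>j\<in>UNIV - {i}. f j) = (\<Sum>j\<in>UNIV. f j)"
  by (rule sum.mono_neutral_left) auto

lemma rhs_sum_zero:
  fixes x' v' :: "'k::{finite,linorder} \<Rightarrow> real ^ 'n"
  shows "(\<Sum>i\<in>UNIV. flock_rhs K \<sigma> \<beta> d0 d1 \<theta> x' v' i) = 0"
proof -
  have a: "(\<Sum>i\<in>UNIV. \<Sum>j\<in>UNIV. align_weight K \<sigma> \<beta> (x' i) (x' j) *\<^sub>R (v' j - v' i)) = 0"
    by (rule sum_antisym_zero) (simp add: align_weight_def norm_minus_commute algebra_simps)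
  have b: "(\<Sum>i\<in>UNIV. \<Sum>j\<in>UNIV. fsing d \<theta> ((norm (x' i - x' j))\<^sup>2) *\<^sub>R (x' i - x' j)) = 0" for d
    by (rule sum_antisym_zero) (simp add: norm_minus_commute algebra_simps)
  have c: "(\<Sum>i\<in>UNIV. \<Sum>j\<in>UNIV. fsing d \<theta> ((norm (x' i - x' j))\<^sup>2) *\<^sub>R (x' j - x' i)) = 0" for d
    by (rule sum_antisym_zero) (simp add: norm_minus_commute algebra_simps)
  show ?thesis
    unfolding flock_rhs_def sum.distrib
    by (simp add: sum_minus_self a b c flip: scaleR_sum_right)
qed

locale flock =
  fixes x v :: "real \<Rightarrow> 'k::{finite,linorder} \<Rightarrow> real ^ 'n"
    and K \<sigma> d0 d1 \<beta> :: real and \<theta> :: nat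
  assumes k2: "CARD('k) \<ge> 2"
    and K: "K > 0" and sig: "\<sigma> > 0" and d0: "0 < d0" and d01: "d0 < d1"
    and beta: "0 < \<beta>" "\<beta> \<le> 1/2"
    and theta: "\<theta> > 0" "even \<theta>"
    and init: "\<And>i j. i \<noteq> j \<Longrightarrow> d0 < (norm (x 0 i - x 0 j))\<^sup>2 \<and> (norm (x 0 i - x 0 j))\<^sup>2 < d1"
    and defined: "\<And>t i j. t \<ge> 0 \<Longrightarrow> i \<noteq> j \<Longrightarrow>
                    (norm (x t i - x t j))\<^sup>2 \<noteq> d0 \<and> (norm (x t i - x t j))\<^sup>2 \<noteq> d1"
    and dx: "\<And>t i. t \<ge> 0 \<Longrightarrow> ((\<lambda>s. x s i) has_vector_derivative v t i) (at t within {0..})"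
    and dv: "\<And>t i. t \<ge> 0 \<Longrightarrow>
               ((\<lambda>s. v s i) has_vector_derivative flock_rhs K \<sigma> \<beta> d0 d1 \<theta> (x t) (v t) i)
                 (at t within {0..})"
begin

abbreviation "w t i \<equiv> flock_rhs K \<sigma> \<beta> d0 d1 \<theta> (x t) (v t) i"
abbreviation "r t i j \<equiv> (norm (x t i - x t j))\<^sup>2"

lemma avg_const: "t \<ge> 0 \<Longrightarrow> avg (v t) = avg (v 0)"
proof -
  assume t: "t \<ge> 0"
  have "((\<lambda>s. avg (v s)) has_derivative (\<lambda>h. 0)) (at s within {0..})" if "s \<in> {0..}" for s
  proof -
    have "((\<lambda>s. avg (v s)) has_vector_derivative (1 / real CARD('k)) *\<^sub>R (\<Sum>i\<in>UNIV. w s i)) (at s within {0..})"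
      unfolding avg_def using that
      by (intro has_vector_derivative_sum bounded_linear.has_vector_derivative[OF bounded_linear_scaleR_right] dv) auto
    then show ?thesis by (simp add: rhs_sum_zero has_vector_derivative_def)
  qed
  then show ?thesis using has_derivative_zero_unique[of "{0..}" "\<lambda>s. avg (v s)" t 0] t by auto
qed

lemma cont_x: "continuous_on {0..} (\<lambda>s. x s i)"
  by (rule continuous_on_vector_derivative) (use dx in auto)

lemma cont_v: "continuous_on {0..} (\<lambda>s. v s i)"
  by (rule continuous_on_vector_derivative) (use dv in auto)

lemma cont_r: "continuous_on {0..} (\<lambda>s. r s i j)"
  by (intro continuous_intros cont_x)

lemma r_bounds:
  assumes t: "t \<ge> 0" and ij: "i \<noteq> j"
  shows "d0 < r t i j \<and> r t i j < d1"
proof (rule ccontr)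
  assume "\<not> ?thesis"
  then consider "r t i j \<le> d0" | "r t i j \<ge> d1" by linarith
  then show False
  proof cases
    case 1
    have "\<exists>s. 0 \<le> s \<and> s \<le> t \<and> r s i j = d0"
      by (rule IVT2') (use 1 init[OF ij] t continuous_on_subset[OF cont_r] in auto)
    then show False using defined ij by blast
  next
    case 2
    have "\<exists>s. 0 \<le> s \<and> s \<le> t \<and> r s i j = d1"
      by (rule IVT') (use 2 init[OF ij] t continuous_on_subset[OF cont_r] in auto)
    then show False using defined ij by blast
  qed
qed

lemma r_le: "t \<ge> 0 \<Longrightarrow> r t i j < d1"
  using r_bounds[of t i j] d0 d01 by (cases "i = j") auto

lemma x_bounded: "t \<ge> 0 \<Longrightarrow> norm (x t i - avg (x t)) \<le> sqrt d1"
proof -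
  assume t: "t \<ge> 0"
  have k0: "real CARD('k) > 0" by simp
  have "x t i - avg (x t) = (1 / real CARD('k)) *\<^sub>R (\<Sum>j\<in>UNIV. (x t i - x t j))"
    unfolding avg_def using k0 by (simp add: sum_subtractf scaleR_diff_right sum_constant_scaleR del: sum_constant)
  then have "norm (x t i - avg (x t)) = (1 / real CARD('k)) * norm (\<Sum>j\<in>UNIV. (x t i - x t j))"
    by simp
  also have "\<dots> \<le> (1 / real CARD('k)) * (\<Sum>j\<in>UNIV. norm (x t i - x t j))"
    by (intro mult_left_mono norm_sum) auto
  also have "\<dots> \<le> (1 / real CARD('k)) * (\<Sum>j\<in>(UNIV::'k set). sqrt d1)"
  proof (intro mult_left_mono sum_mono)
    fix j
    have "sqrt (r t i j) \<le> sqrt d1" by (rule real_sqrt_le_mono) (use r_le[OF t, of i j] in simp)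
    then show "norm (x t i - x t j) \<le> sqrt d1" by simp
  qed auto
  also have "\<dots> = sqrt d1" using k0 by simp
  finally show ?thesis .
qed

end



lemma sum_antisym_inner2:
  fixes h :: "'k::finite \<Rightarrow> 'k \<Rightarrow> 'a::real_inner" and w' :: "'k \<Rightarrow> 'a"
  assumes "\<And>i j. h j i = - h i j"
  shows "(\<Sum>i\<in>UNIV. w' i \<bullet> (\<Sum>j\<in>UNIV. h i j)) = (1/2) * (\<Sum>i\<in>UNIV. \<Sum>j\<in>UNIV. h i j \<bullet> (w' i - w' j))"
proof -
  have "(\<Sum>i\<in>UNIV. w' i \<bullet> (\<Sum>j\<in>UNIV. h i j)) = (\<Sum>i\<in>UNIV. \<Sum>j\<in>UNIV. h i j \<bullet> w' i)"
    by (simp add: inner_sum_right inner_commute)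
  also have "\<dots> = (1/2) * (\<Sum>i\<in>UNIV. \<Sum>j\<in>UNIV. h i j \<bullet> (w' i - w' j))"
    by (rule sum_antisym_inner) (rule assms)
  finally show ?thesis .
qed

lemma rhs_inner:
  fixes x' v' :: "'k::{finite,linorder} \<Rightarrow> real ^ 'n" and c :: "real ^ 'n"
  shows "(\<Sum>i\<in>UNIV. (v' i - c) \<bullet> flock_rhs K \<sigma> \<beta> d0 d1 \<theta> x' v' i)
     = -(1/2) * (\<Sum>i\<in>UNIV. \<Sum>j\<in>UNIV. align_weight K \<sigma> \<beta> (x' i) (x' j) * (norm (v' i - v' j))\<^sup>2)
       + Lambda v' * ((1/2) * (\<Sum>i\<in>UNIV. \<Sum>j\<in>UNIV. (fsing d0 \<theta> ((norm (x' i - x' j))\<^sup>2) - fsing d1 \<theta> ((norm (x' i - x' j))\<^sup>2))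
              * ((x' i - x' j) \<bullet> (v' i - v' j))))"
proof -
  let ?u = "\<lambda>i. v' i - c"
  let ?a = "\<lambda>i j. align_weight K \<sigma> \<beta> (x' i) (x' j)"
  let ?f = "\<lambda>d i j. fsing d \<theta> ((norm (x' i - x' j))\<^sup>2)"
  have P1: "(\<Sum>i\<in>UNIV. ?u i \<bullet> (\<Sum>j\<in>UNIV. ?a i j *\<^sub>R (v' j - v' i)))
      = -(1/2) * (\<Sum>i\<in>UNIV. \<Sum>j\<in>UNIV. ?a i j * (norm (v' i - v' j))\<^sup>2)"
  proof -
    have "(\<Sum>i\<in>UNIV. ?u i \<bullet> (\<Sum>j\<in>UNIV. ?a i j *\<^sub>R (v' j - v' i)))
       = (1/2) * (\<Sum>i\<in>UNIV. \<Sum>j\<in>UNIV. (?a i j *\<^sub>R (v' j - v' i)) \<bullet> (?u i - ?u j))"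
      by (rule sum_antisym_inner2) (simp add: align_weight_def norm_minus_commute algebra_simps)
    also have "\<dots> = (1/2) * (\<Sum>i\<in>UNIV. \<Sum>j\<in>UNIV. - (?a i j * (norm (v' i - v' j))\<^sup>2))"
    proof -
      have "(?a i j *\<^sub>R (v' j - v' i)) \<bullet> (?u i - ?u j) = - (?a i j * (norm (v' i - v' j))\<^sup>2)" for i j
      proof -
        have "(?a i j *\<^sub>R (v' j - v' i)) \<bullet> (?u i - ?u j) = ?a i j * ((v' j - v' i) \<bullet> (v' i - v' j))"
          by simp
        also have "(v' j - v' i) \<bullet> (v' i - v' j) = - (norm (v' i - v' j))\<^sup>2"
          by (simp add: power2_norm_eq_inner inner_diff_left inner_diff_right inner_commute)
        finally show ?thesis by simp
      qed
      then show ?thesis by simp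
    qed
    also have "\<dots> = -(1/2) * (\<Sum>i\<in>UNIV. \<Sum>j\<in>UNIV. ?a i j * (norm (v' i - v' j))\<^sup>2)"
      by (simp add: sum_negf)
    finally show ?thesis .
  qed
  have P2: "(\<Sum>i\<in>UNIV. ?u i \<bullet> (Lambda v' *\<^sub>R (\<Sum>j\<in>UNIV - {i}. ?f d i j *\<^sub>R (x' i - x' j))))
      = Lambda v' * ((1/2) * (\<Sum>i\<in>UNIV. \<Sum>j\<in>UNIV. ?f d i j * ((x' i - x' j) \<bullet> (v' i - v' j))))" for d
  proof -
    have "(\<Sum>i\<in>UNIV. ?u i \<bullet> (Lambda v' *\<^sub>R (\<Sum>j\<in>UNIV - {i}. ?f d i j *\<^sub>R (x' i - x' j))))
      = Lambda v' * (\<Sum>i\<in>UNIV. ?u i \<bullet> (\<Sum>j\<in>UNIV. ?f d i j *\<^sub>R (x' i - x' j)))"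
      by (simp add: sum_minus_self sum_distrib_left)
    also have "(\<Sum>i\<in>UNIV. ?u i \<bullet> (\<Sum>j\<in>UNIV. ?f d i j *\<^sub>R (x' i - x' j)))
       = (1/2) * (\<Sum>i\<in>UNIV. \<Sum>j\<in>UNIV. (?f d i j *\<^sub>R (x' i - x' j)) \<bullet> (?u i - ?u j))"
      by (rule sum_antisym_inner2) (simp add: norm_minus_commute algebra_simps)
    finally show ?thesis by simp
  qed
  have P3: "(\<Sum>i\<in>UNIV. ?u i \<bullet> (Lambda v' *\<^sub>R (\<Sum>j\<in>UNIV - {i}. ?f d i j *\<^sub>R (x' j - x' i))))
      = - (Lambda v' * ((1/2) * (\<Sum>i\<in>UNIV. \<Sum>j\<in>UNIV. ?f d i j * ((x' i - x' j) \<bullet> (v' i - v' j)))))" for d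
  proof -
    have "(\<Sum>i\<in>UNIV. ?u i \<bullet> (Lambda v' *\<^sub>R (\<Sum>j\<in>UNIV - {i}. ?f d i j *\<^sub>R (x' j - x' i))))
      = - (\<Sum>i\<in>UNIV. ?u i \<bullet> (Lambda v' *\<^sub>R (\<Sum>j\<in>UNIV - {i}. ?f d i j *\<^sub>R (x' i - x' j))))"
    proof -
      have "?f d i j *\<^sub>R (x' j - x' i) = - (?f d i j *\<^sub>R (x' i - x' j))" for i j
        by (simp add: algebra_simps)
      then show ?thesis by (simp add: sum_negf inner_sum_right sum_distrib_left)
    qed
    then show ?thesis using P2[of d] by simp
  qed
  have e: "(\<Sum>i\<in>UNIV. \<Sum>j\<in>UNIV. (?f d0 i j - ?f d1 i j) * ((x' i - x' j) \<bullet> (v' i - v' j)))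
     = (\<Sum>i\<in>UNIV. \<Sum>j\<in>UNIV. ?f d0 i j * ((x' i - x' j) \<bullet> (v' i - v' j)))
     - (\<Sum>i\<in>UNIV. \<Sum>j\<in>UNIV. ?f d1 i j * ((x' i - x' j) \<bullet> (v' i - v' j)))"
    by (simp add: left_diff_distrib sum_subtractf)
  show ?thesis
    unfolding flock_rhs_def inner_add_right sum.distrib P1 P2 P3 e
    by (simp add: right_diff_distrib)
qed

lemma Lambda_eq:
  fixes v' :: "'k::{finite,linorder} \<Rightarrow> real ^ 'n"
  shows "Lambda v' = sqrt (\<Sum>i\<in>UNIV. (norm (v' i - avg v'))\<^sup>2)"
proof -
  let ?u = "\<lambda>i. v' i - avg v'"
  have k0: "real CARD('k) > 0" by simp
  have su: "(\<Sum>i\<in>UNIV. ?u i) = 0"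
    unfolding avg_def using k0 by (simp add: sum_subtractf sum_constant_scaleR del: sum_constant)
  have "(\<Sum>(i, j) \<in> {(i, j). j < i}. (norm (v' i - v' j))\<^sup>2) = (1/2) * (\<Sum>i\<in>UNIV. \<Sum>j\<in>UNIV. (norm (v' i - v' j))\<^sup>2)"
    by (rule sum_lower_half) (auto simp: norm_minus_commute)
  also have "(\<Sum>i\<in>UNIV. \<Sum>j\<in>UNIV. (norm (v' i - v' j))\<^sup>2) = (\<Sum>i\<in>UNIV. \<Sum>j\<in>UNIV. (norm (?u i - ?u j))\<^sup>2)"
    by simp
  also have "\<dots> = 2 * real CARD('k) * (\<Sum>i\<in>UNIV. (norm (?u i))\<^sup>2)"
    using sum_sq_diff[of ?u] su by simp
  finally show ?thesis unfolding Lambda_def using k0 by simp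
qed




lemma G0_deriv:
  fixes d s :: real
  assumes p: "p \<ge> 1" and s: "s \<noteq> d"
  shows "((\<lambda>s. 1 / (real p * (s - d)^p)) has_real_derivative - (1 / (s - d)^(Suc p))) (at s)"
proof -
  obtain q where q: "p = Suc q" using p by (cases p) auto
  show ?thesis
    unfolding q using s
    apply (intro derivative_eq_intros)
    apply (rule refl | simp)+
    done
qed

lemma G1_deriv:
  fixes d s :: real
  assumes p: "p \<ge> 1" and s: "s \<noteq> d"
  shows "((\<lambda>s. 1 / (real p * (d - s)^p)) has_real_derivative (1 / (d - s)^(Suc p))) (at s)"
proof -
  obtain q where q: "p = Suc q" using p by (cases p) auto
  show ?thesis
    unfolding q using s
    apply (intro derivative_eq_intros)
    apply (rule refl | simp)+
    done
qed

context flock begin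

definition u where "u t i = v t i - avg (v 0)"
definition N where "N t = sqrt (\<Sum>i\<in>UNIV. (norm (u t i))\<^sup>2)"
definition G0 :: "real \<Rightarrow> real" where "G0 s = 1 / (real (\<theta> - 1) * (s - d0)^(\<theta> - 1))"
definition G1 :: "real \<Rightarrow> real" where "G1 s = 1 / (real (\<theta> - 1) * (d1 - s)^(\<theta> - 1))"
definition Q where "Q t = (1/4) * (\<Sum>(i,j)\<in>{(i,j). i \<noteq> j}. G0 (r t i j) + G1 (r t i j))"
definition Dp where "Dp t i j = (x t i - x t j) \<bullet> (v t i - v t j)"
definition Q' where "Q' t = -(1/2) * (\<Sum>i\<in>UNIV. \<Sum>j\<in>UNIV. (fsing d0 \<theta> (r t i j) - fsing d1 \<theta> (r t i j)) * Dp t i j)"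
definition A where "A t = (1/2) * (\<Sum>i\<in>UNIV. \<Sum>j\<in>UNIV. align_weight K \<sigma> \<beta> (x t i) (x t j) * (norm (v t i - v t j))\<^sup>2)"
definition N' where "N' t = (if N t = 0 then 0 else (\<Sum>i\<in>UNIV. u t i \<bullet> w t i) / N t)"
definition c where "c = real CARD('k) * (K / (\<sigma>\<^sup>2 + d1) powr \<beta>)"

lemma theta2: "\<theta> \<ge> 2" using theta by presburger

lemma u_sum: "t \<ge> 0 \<Longrightarrow> (\<Sum>i\<in>UNIV. u t i) = 0"
proof -
  assume t: "t \<ge> 0"
  have "(\<Sum>i\<in>UNIV. u t i) = (\<Sum>i\<in>UNIV. v t i - avg (v t))" unfolding u_def using avg_const[OF t] by simp
  also have "\<dots> = 0" unfolding avg_def by (simp add: sum_subtractf sum_constant_scaleR del: sum_constant)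
  finally show ?thesis .
qed

lemma N_Lambda: assumes t: "t \<ge> 0" shows "Lambda (v t) = N t"
  unfolding Lambda_eq N_def u_def using avg_const[OF t] by simp

lemma N_nonneg: "N t \<ge> 0" unfolding N_def by (intro real_sqrt_ge_zero sum_nonneg) auto

lemma inner_eq: "t \<ge> 0 \<Longrightarrow> (\<Sum>i\<in>UNIV. u t i \<bullet> w t i) = - A t - N t * Q' t"
proof -
  assume t: "t \<ge> 0"
  have "(\<Sum>i\<in>UNIV. u t i \<bullet> w t i) = (\<Sum>i\<in>UNIV. (v t i - avg (v 0)) \<bullet> w t i)" unfolding u_def ..
  also have "\<dots> = - A t + Lambda (v t) * ((1/2) * (\<Sum>i\<in>UNIV. \<Sum>j\<in>UNIV. (fsing d0 \<theta> (r t i j) - fsing d1 \<theta> (r t i j)) * Dp t i j))"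
    unfolding rhs_inner A_def Dp_def by simp
  also have "\<dots> = - A t - N t * Q' t" unfolding Q'_def N_Lambda[OF t] by simp
  finally show ?thesis .
qed

lemma sd1_pos: "\<sigma>\<^sup>2 + d1 > 0" using sig d0 d01 by (simp add: add_pos_pos)

lemma c_pos: "c > 0" unfolding c_def using K sd1_pos by simp

lemma A_ge: "t \<ge> 0 \<Longrightarrow> A t \<ge> c * (N t)\<^sup>2"
proof -
  assume t: "t \<ge> 0"
  let ?a = "K / (\<sigma>\<^sup>2 + d1) powr \<beta>"
  have aw: "align_weight K \<sigma> \<beta> (x t i) (x t j) \<ge> ?a" for i j
  proof -
    have "(\<sigma>\<^sup>2 + r t i j) powr \<beta> \<le> (\<sigma>\<^sup>2 + d1) powr \<beta>"
      using r_le[OF t, of i j] beta by (intro powr_mono2) auto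
    moreover have "(\<sigma>\<^sup>2 + r t i j) powr \<beta> > 0" using sig
      by (simp add: add_pos_nonneg)
    moreover have "(\<sigma>\<^sup>2 + d1) powr \<beta> > 0" using sd1_pos by simp
    ultimately show ?thesis unfolding align_weight_def using K
      by (intro divide_left_mono) (auto intro: mult_pos_pos)
  qed
  have "(\<Sum>i\<in>UNIV. \<Sum>j\<in>UNIV. ?a * (norm (v t i - v t j))\<^sup>2)
      \<le> (\<Sum>i\<in>UNIV. \<Sum>j\<in>UNIV. align_weight K \<sigma> \<beta> (x t i) (x t j) * (norm (v t i - v t j))\<^sup>2)"
    by (intro sum_mono mult_right_mono aw) auto
  moreover have "(\<Sum>i\<in>UNIV. \<Sum>j\<in>UNIV. ?a * (norm (v t i - v t j))\<^sup>2) = ?a * (2 * real CARD('k) * (N t)\<^sup>2)"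
  proof -
    have "(\<Sum>i\<in>UNIV. \<Sum>j\<in>UNIV. (norm (v t i - v t j))\<^sup>2) = (\<Sum>i\<in>UNIV. \<Sum>j\<in>UNIV. (norm (u t i - u t j))\<^sup>2)"
      unfolding u_def by simp
    also have "\<dots> = 2 * real CARD('k) * (N t)\<^sup>2"
      unfolding sum_sq_diff u_sum[OF t] N_def by (simp add: sum_nonneg)
    finally have e: "(\<Sum>i\<in>UNIV. \<Sum>j\<in>UNIV. (norm (v t i - v t j))\<^sup>2) = 2 * real CARD('k) * (N t)\<^sup>2" .
    show ?thesis by (simp only: e[symmetric] sum_distrib_left)
  qed
  ultimately have "?a * (2 * real CARD('k) * (N t)\<^sup>2) \<le> (\<Sum>i\<in>UNIV. \<Sum>j\<in>UNIV. align_weight K \<sigma> \<beta> (x t i) (x t j) * (norm (v t i - v t j))\<^sup>2)"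
    by linarith
  then have "(1/2) * (?a * (2 * real CARD('k) * (N t)\<^sup>2)) \<le> A t" unfolding A_def
    by (rule mult_left_mono) simp
  moreover have "c * (N t)\<^sup>2 = (1/2) * (?a * (2 * real CARD('k) * (N t)\<^sup>2))" unfolding c_def by simp
  ultimately show ?thesis by simp
qed

end


context flock begin

lemma du: "t \<ge> 0 \<Longrightarrow> ((\<lambda>s. u s i) has_vector_derivative w t i) (at t within {0..})"
  unfolding u_def has_vector_derivative_diff_const by (rule dv)

lemma dr: assumes t: "t \<ge> 0"
  shows "((\<lambda>s. r s i j) has_real_derivative 2 * Dp t i j) (at t within {0..})"
proof -
  have "((\<lambda>s. (x s i - x s j) \<bullet> (x s i - x s j)) has_vector_derivative
      ((x t i - x t j) \<bullet> (v t i - v t j) + (v t i - v t j) \<bullet> (x t i - x t j))) (at t within {0..})"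
    by (rule bounded_bilinear.has_vector_derivative[OF bounded_bilinear_inner])
       (intro has_vector_derivative_diff dx t)+
  then show ?thesis
    unfolding has_real_derivative_iff_has_vector_derivative power2_norm_eq_inner Dp_def
    by (simp add: inner_commute)
qed

lemma G0_eq: "G0 = (\<lambda>s. 1 / (real (\<theta> - 1) * (s - d0)^(\<theta> - 1)))"
  by (rule ext) (simp add: G0_def)
lemma G1_eq: "G1 = (\<lambda>s. 1 / (real (\<theta> - 1) * (d1 - s)^(\<theta> - 1)))"
  by (rule ext) (simp add: G1_def)

lemma dG0: "y \<noteq> d0 \<Longrightarrow> (G0 has_real_derivative - fsing d0 \<theta> y) (at y)"
  using G0_deriv[of "\<theta> - 1" y d0] theta2 unfolding G0_eq fsing_def
  by (simp add: Suc_diff_le)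

lemma dG1: "y \<noteq> d1 \<Longrightarrow> (G1 has_real_derivative fsing d1 \<theta> y) (at y)"
proof -
  assume y: "y \<noteq> d1"
  have "(d1 - y) ^ \<theta> = (y - d1) ^ \<theta>"
    using theta(2) by (metis minus_diff_eq power_minus_even)
  then show ?thesis
    using G1_deriv[of "\<theta> - 1" y d1] theta2 y unfolding G1_eq fsing_def
    by (simp add: Suc_diff_le)
qed

lemma dQ: assumes t: "t \<ge> 0"
  shows "(Q has_real_derivative Q' t) (at t within {0..})"
proof -
  let ?Off = "{(i::'k,j). i \<noteq> j}"
  let ?g = "\<lambda>i j. (- fsing d0 \<theta> (r t i j) + fsing d1 \<theta> (r t i j)) * (2 * Dp t i j)"
  have tm: "((\<lambda>s. G0 (r s i j) + G1 (r s i j)) has_real_derivative ?g i j) (at t within {0..})"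
    if "i \<noteq> j" for i j
  proof -
    have rb: "r t i j \<noteq> d0" "r t i j \<noteq> d1" using r_bounds[OF t that] by auto
    show ?thesis unfolding distrib_right
      by (intro DERIV_add DERIV_chain2[OF dG0] DERIV_chain2[OF dG1] dr t rb)
  qed
  have "((\<lambda>s. (1/4) * (\<Sum>(i,j)\<in>?Off. G0 (r s i j) + G1 (r s i j))) has_real_derivative
         (1/4) * (\<Sum>(i,j)\<in>?Off. ?g i j)) (at t within {0..})"
    by (intro DERIV_cmult DERIV_sum) (use tm in auto)
  moreover have "(1/4) * (\<Sum>(i,j)\<in>?Off. ?g i j) = Q' t"
  proof -
    have "(\<Sum>(i,j)\<in>?Off. ?g i j) = (\<Sum>(i,j)\<in>UNIV. ?g i j)"
      by (rule sum.mono_neutral_left) (auto simp: Dp_def)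
    also have "\<dots> = (\<Sum>i\<in>UNIV. \<Sum>j\<in>UNIV. ?g i j)"
      by (simp add: sum.cartesian_product)
    also have "\<dots> = (\<Sum>i\<in>UNIV. \<Sum>j\<in>UNIV. (-2) * ((fsing d0 \<theta> (r t i j) - fsing d1 \<theta> (r t i j)) * Dp t i j))"
      by (intro sum.cong refl) (simp add: algebra_simps)
    also have "\<dots> = (-2) * (\<Sum>i\<in>UNIV. \<Sum>j\<in>UNIV. (fsing d0 \<theta> (r t i j) - fsing d1 \<theta> (r t i j)) * Dp t i j)"
      by (simp only: sum_distrib_left)
    finally show ?thesis unfolding Q'_def by simp
  qed
  ultimately show ?thesis unfolding Q_def[abs_def] by simp
qed

end


context flock begin

lemma N_zero_u: assumes "N t = 0" shows "u t i = 0"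
proof -
  have "(\<Sum>i\<in>UNIV. (norm (u t i))\<^sup>2) = 0" using assms unfolding N_def
    by (subst (asm) real_sqrt_eq_zero_cancel_iff) auto
  then have "\<forall>i\<in>UNIV. (norm (u t i))\<^sup>2 = 0" by (subst (asm) sum_nonneg_eq_0_iff) auto
  then show ?thesis by simp
qed

lemma N_zero_w: assumes t: "t \<ge> 0" and N0: "N t = 0" shows "w t i = 0"
proof -
  have vv: "v t j = avg (v 0)" for j using N_zero_u[OF N0, of j] unfolding u_def by simp
  have L: "Lambda (v t) = 0" using N_Lambda[OF t] N0 by simp
  show ?thesis unfolding flock_rhs_def L by (simp add: vv)
qed

lemma dN: assumes t: "t \<ge> 0" shows "(N has_real_derivative N' t) (at t within {0..})"
proof (cases "N t = 0")
  case False
  let ?S = "\<lambda>s. \<Sum>i\<in>UNIV. u s i \<bullet> u s i"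
  have NS: "N = (\<lambda>s. sqrt (?S s))" by (rule ext) (simp add: N_def power2_norm_eq_inner)
  have Spos: "?S t > 0"
  proof -
    have "?S t \<ge> 0" by (intro sum_nonneg) auto
    moreover have "?S t \<noteq> 0" using False NS by (metis real_sqrt_zero)
    ultimately show ?thesis by linarith
  qed
  have dS: "(?S has_real_derivative (\<Sum>i\<in>UNIV. 2 * (u t i \<bullet> w t i))) (at t within {0..})"
  proof (rule DERIV_sum)
    fix i :: 'k
    have "((\<lambda>s. u s i \<bullet> u s i) has_vector_derivative (u t i \<bullet> w t i + w t i \<bullet> u t i)) (at t within {0..})"
      by (rule bounded_bilinear.has_vector_derivative[OF bounded_bilinear_inner]) (intro du t)+
    then show "((\<lambda>s. u s i \<bullet> u s i) has_real_derivative 2 * (u t i \<bullet> w t i)) (at t within {0..})"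
      unfolding has_real_derivative_iff_has_vector_derivative by (simp add: inner_commute)
  qed
  have "((\<lambda>s. sqrt (?S s)) has_real_derivative inverse (sqrt (?S t)) / 2 * (\<Sum>i\<in>UNIV. 2 * (u t i \<bullet> w t i))) (at t within {0..})"
    by (rule DERIV_chain2[OF DERIV_real_sqrt[OF Spos] dS])
  moreover have "inverse (sqrt (?S t)) / 2 * (\<Sum>i\<in>UNIV. 2 * (u t i \<bullet> w t i)) = N' t"
    unfolding N'_def using False NS by (simp add: sum_distrib_left[symmetric] field_simps)
  ultimately show ?thesis using NS by simp
next
  case True
  have u0: "u t i = 0" for i using N_zero_u[OF True] .
  have w0: "w t i = 0" for i using N_zero_w[OF t True] .
  have lim_i: "((\<lambda>y. norm (u y i) / norm (y - t)) \<longlongrightarrow> 0) (at t within {0..})" for i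
  proof -
    have "((\<lambda>s. u s i) has_derivative (\<lambda>h. h *\<^sub>R 0)) (at t within {0..})"
      using du[OF t, of i] w0 unfolding has_vector_derivative_def by simp
    then have "((\<lambda>y. ((u y i - u t i) - (y - t) *\<^sub>R 0) /\<^sub>R norm (y - t)) \<longlongrightarrow> 0) (at t within {0..})"
      unfolding has_derivative_at_within by simp
    then have "((\<lambda>y. norm (((u y i - u t i) - (y - t) *\<^sub>R 0) /\<^sub>R norm (y - t))) \<longlongrightarrow> 0) (at t within {0..})"
      by (rule tendsto_norm_zero)
    then show ?thesis using u0 by (simp add: divide_inverse mult.commute)
  qed
  have "((\<lambda>y. (N y - N t) / (y - t)) \<longlongrightarrow> 0) (at t within {0..})"
  proof (rule Lim_null_comparison)
    show "((\<lambda>y. \<Sum>i\<in>UNIV. norm (u y i) / norm (y - t)) \<longlongrightarrow> 0) (at t within {0..})"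
      using tendsto_sum[of UNIV "\<lambda>i y. norm (u y i) / norm (y - t)" "\<lambda>i. 0"] lim_i by simp
    show "\<forall>\<^sub>F y in at t within {0..}. norm ((N y - N t) / (y - t)) \<le> (\<Sum>i\<in>UNIV. norm (u y i) / norm (y - t))"
    proof (intro always_eventually allI)
      fix y
      have "N y = L2_set (\<lambda>i. norm (u y i)) UNIV" unfolding N_def L2_set_def by simp
      also have "\<dots> \<le> (\<Sum>i\<in>UNIV. norm (u y i))" by (rule L2_set_le_sum) auto
      finally have "N y \<le> (\<Sum>i\<in>UNIV. norm (u y i))" .
      then have "N y / norm (y - t) \<le> (\<Sum>i\<in>UNIV. norm (u y i)) / norm (y - t)"
        by (intro divide_right_mono) auto
      then show "norm ((N y - N t) / (y - t)) \<le> (\<Sum>i\<in>UNIV. norm (u y i) / norm (y - t))"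
        using True N_nonneg[of y] by (simp add: sum_divide_distrib abs_div)
    qed
  qed
  then show ?thesis unfolding has_field_derivative_iff N'_def using True by simp
qed

lemma key: assumes t: "t \<ge> 0" shows "N' t + Q' t \<le> - c * N t"
proof (cases "N t = 0")
  case True
  have "Dp t i j = 0" for i j
  proof -
    have "v t i = v t j" using N_zero_u[OF True, of i] N_zero_u[OF True, of j] unfolding u_def by simp
    then show ?thesis unfolding Dp_def by simp
  qed
  then show ?thesis unfolding N'_def Q'_def using True by simp
next
  case False
  then have Np: "N t > 0" using N_nonneg[of t] by linarith
  have "N' t = (- A t - N t * Q' t) / N t" unfolding N'_def inner_eq[OF t] using False by simp
  also have "\<dots> = - A t / N t - Q' t" using Np by (simp add: field_simps)
  finally have "N' t + Q' t = - (A t / N t)" by simp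
  also have "\<dots> \<le> - (c * (N t)\<^sup>2 / N t)"
    using A_ge[OF t] Np by (simp add: divide_right_mono)
  also have "c * (N t)\<^sup>2 / N t = c * N t" using Np by (simp add: power2_eq_square)
  finally show ?thesis by simp
qed

end


context flock begin

lemma cont_N: "continuous_on {0..} N"
  by (rule continuous_on_vector_derivative)
     (use dN in \<open>auto simp: has_real_derivative_iff_has_vector_derivative\<close>)

lemma cont_Q: "continuous_on {0..} Q"
  by (rule continuous_on_vector_derivative)
     (use dQ in \<open>auto simp: has_real_derivative_iff_has_vector_derivative\<close>)

lemma G0_pos: "s > d0 \<Longrightarrow> G0 s > 0"
  unfolding G0_def using theta2 by simp

lemma G1_pos: "s < d1 \<Longrightarrow> G1 s > 0"
  unfolding G1_def using theta2 by simp

lemma Q_nonneg: assumes t: "t \<ge> 0" shows "Q t \<ge> 0"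
proof -
  have "(\<Sum>(i,j)\<in>{(i::'k,j). i \<noteq> j}. G0 (r t i j) + G1 (r t i j)) \<ge> 0"
  proof (rule sum_nonneg)
    fix ij assume "ij \<in> {(i::'k,j). i \<noteq> j}"
    then obtain i j where ij: "ij = (i,j)" "i \<noteq> j" by auto
    show "0 \<le> (case ij of (i,j) \<Rightarrow> G0 (r t i j) + G1 (r t i j))"
      using G0_pos G1_pos r_bounds[OF t ij(2)] unfolding ij(1)
      by (simp add: add_pos_pos less_imp_le)
  qed
  then show ?thesis unfolding Q_def by simp
qed

lemma energy: assumes T: "T \<ge> 0"
  shows "N T + Q T + c * integral {0..T} N \<le> N 0 + Q 0"
proof -
  define G where "G s = N s + Q s + c * integral {0..s} N" for s
  have cNT: "continuous_on {0..T} N" using continuous_on_subset[OF cont_N] by auto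
  have "G T \<le> G 0"
  proof (rule DERIV_nonpos_imp_decreasing_open[OF T])
    fix s assume s: "0 < s" "s < T"
    have a1: "at s within {0..} = at s" using s by (intro at_within_interior) auto
    have a2: "at s within {0..T} = at s" using s by (intro at_within_interior) auto
    have "(N has_real_derivative N' s) (at s)" using dN[of s] s a1 by simp
    moreover have "(Q has_real_derivative Q' s) (at s)" using dQ[of s] s a1 by simp
    moreover have "((\<lambda>s. integral {0..s} N) has_real_derivative N s) (at s)"
      using integral_has_real_derivative[OF cNT, of s] s a2 by simp
    ultimately have "(G has_real_derivative (N' s + Q' s + c * N s)) (at s)"
      unfolding G_def[abs_def] by (intro DERIV_add DERIV_cmult)
    moreover have "N' s + Q' s + c * N s \<le> 0" using key[of s] s by simp
    ultimately show "\<exists>y. (G has_real_derivative y) (at s) \<and> y \<le> 0" by blast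
  next
    have "continuous_on {0..T} (\<lambda>s. integral {0..s} N)"
      by (rule continuous_on_vector_derivative) (rule integral_has_vector_derivative[OF cNT])
    then show "continuous_on {0..T} G"
      unfolding G_def[abs_def] using cNT continuous_on_subset[OF cont_Q, of "{0..T}"]
      by (intro continuous_intros) auto
  qed
  then show ?thesis unfolding G_def by simp
qed

definition E0 where "E0 = N 0 + Q 0"

lemma intN_nonneg: "T \<ge> 0 \<Longrightarrow> integral {0..T} N \<ge> 0"
  by (rule integral_nonneg) (auto intro!: integrable_continuous_interval continuous_on_subset[OF cont_N] N_nonneg)

lemma N_bound: "T \<ge> 0 \<Longrightarrow> N T \<le> E0"
  using energy[of T] Q_nonneg[of T] intN_nonneg[of T] c_pos unfolding E0_def
  by (smt (verit) mult_nonneg_nonneg)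

lemma I_bound: "T \<ge> 0 \<Longrightarrow> integral {0..T} N \<le> E0 / c"
proof -
  assume T: "T \<ge> 0"
  have "c * integral {0..T} N \<le> E0"
    using energy[of T] Q_nonneg[of T] N_nonneg[of T] T unfolding E0_def by linarith
  then show ?thesis using c_pos by (simp add: field_simps)
qed

lemma Q_bound: "T \<ge> 0 \<Longrightarrow> Q T \<le> E0"
  using energy[of T] intN_nonneg[of T] N_nonneg[of T] c_pos unfolding E0_def
  by (smt (verit) mult_nonneg_nonneg)

lemma G_bound: assumes T: "T \<ge> 0" and ij: "i \<noteq> j"
  shows "G0 (r T i j) \<le> 4 * E0" "G1 (r T i j) \<le> 4 * E0"
proof -
  let ?F = "\<lambda>(i,j). G0 (r T i j) + G1 (r T i j)"
  have nn: "?F ij \<ge> 0" if "ij \<in> {(i::'k,j). i \<noteq> j}" for ij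
    using that G0_pos G1_pos r_bounds[OF T] by (auto simp: add_pos_pos less_imp_le)
  have "?F (i,j) \<le> (\<Sum>ij\<in>{(i::'k,j). i \<noteq> j}. ?F ij)"
    by (rule member_le_sum) (use nn ij in auto)
  then have "G0 (r T i j) + G1 (r T i j) \<le> 4 * E0" using Q_bound[OF T] unfolding Q_def by simp
  moreover have "G0 (r T i j) > 0" "G1 (r T i j) > 0" using G0_pos G1_pos r_bounds[OF T ij] by auto
  ultimately show "G0 (r T i j) \<le> 4 * E0" "G1 (r T i j) \<le> 4 * E0" by linarith+
qed

lemma N_int_lim: "N integrable_on {0..} \<and> ((\<lambda>k::nat. integral {0..real k} N) \<longlongrightarrow> integral {0..} N) sequentially"
proof -
  define f where "f k t = (if t \<in> {0..real k} then N t else 0)" for k :: nat and t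
  have int_f: "integral {0..} (f k) = integral {0..real k} N" for k
    unfolding f_def integral_restrict_Int by (simp add: Int_absorb2)
  have "N integrable_on {0..} \<and> ((\<lambda>k. integral {0..} (f k)) \<longlongrightarrow> integral {0..} N) sequentially"
  proof (rule monotone_convergence_increasing)
    fix k
    show "f k integrable_on {0..}"
      unfolding f_def integrable_restrict_Int
      by (simp add: Int_absorb2 integrable_continuous_interval continuous_on_subset[OF cont_N])
  next
    fix k x assume "x \<in> {0::real..}"
    then show "f k x \<le> f (Suc k) x" unfolding f_def using N_nonneg[of x] by auto
  next
    fix x :: real assume x: "x \<in> {0..}"
    obtain n :: nat where n: "x \<le> real n" using real_arch_simple by blast
    have "eventually (\<lambda>k. f k x = N x) sequentially"
      unfolding eventually_sequentially f_def using x n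
      by (intro exI[of _ n]) (auto intro: order_trans)
    then show "((\<lambda>k. f k x) \<longlongrightarrow> N x) sequentially" by (rule tendsto_eventually)
  next
    show "bounded (range (\<lambda>k. integral {0..} (f k)))"
      unfolding bounded_real int_f
    proof (intro exI[of _ "E0 / c"] ballI)
      fix y assume "y \<in> range (\<lambda>k::nat. integral {0..real k} N)"
      then obtain k :: nat where y: "y = integral {0..real k} N" by auto
      show "\<bar>y\<bar> \<le> E0 / c" using intN_nonneg[of "real k"] I_bound[of "real k"] unfolding y by simp
    qed
  qed
  then show ?thesis unfolding int_f .
qed

end



lemma sing_bound:
  fixes s D B :: real
  assumes s: "0 < s" "s < D" and hB: "1 / (real (Suc q) * s^(Suc q)) \<le> B"
  shows "1 / s^(Suc (Suc q)) \<le> (real (Suc q) * B)^2 * D^q"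
proof -
  have sp: "s^(Suc q) > 0" "s^q > 0" using s by auto
  have a: "1 / s^(Suc q) \<le> real (Suc q) * B"
  proof -
    have "real (Suc q) > 0" by simp
    then have "1 / s^(Suc q) = real (Suc q) * (1 / (real (Suc q) * s^(Suc q)))" using sp by (simp del: of_nat_Suc)
    also have "\<dots> \<le> real (Suc q) * B" using hB by (intro mult_left_mono) auto
    finally show ?thesis .
  qed
  have "0 < 1 / s^(Suc q)" using sp by simp
  then have pB: "real (Suc q) * B \<ge> 0" using a by linarith
  have b: "s^q \<le> D^q" using s by (intro power_mono) auto
  have "1 / s = s^q / s^(Suc q)" using s sp by (simp add: field_simps)
  also have "\<dots> \<le> D^q / s^(Suc q)" using b sp by (intro divide_right_mono) auto
  also have "\<dots> = D^q * (1 / s^(Suc q))" by simp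
  also have "\<dots> \<le> D^q * (real (Suc q) * B)" using a s by (intro mult_left_mono) auto
  finally have c: "1 / s \<le> D^q * (real (Suc q) * B)" .
  have "1 / s^(Suc (Suc q)) = (1 / s) * (1 / s^(Suc q))" by (simp add: field_simps)
  also have "\<dots> \<le> (D^q * (real (Suc q) * B)) * (real (Suc q) * B)"
    using c a s sp pB by (intro mult_mono) auto
  also have "\<dots> = (real (Suc q) * B)^2 * D^q" by (simp add: power2_eq_square)
  finally show ?thesis .
qed

context flock begin

definition M0 where "M0 = (real (\<theta> - 1) * (4 * E0))^2 * d1^(\<theta> - 2)"

lemma th_eq: "\<theta> = Suc (Suc (\<theta> - 2))" using theta2 by simp
lemma th1_eq: "\<theta> - 1 = Suc (\<theta> - 2)" using theta2 by simp

lemma fs0: assumes t: "t \<ge> 0" and ij: "i \<noteq> j" shows "\<bar>fsing d0 \<theta> (r t i j)\<bar> \<le> M0"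
proof -
  define q where "q = \<theta> - 2"
  have q: "\<theta> = Suc (Suc q)" using th_eq q_def by simp
  have rb: "d0 < r t i j" "r t i j < d1" using r_bounds[OF t ij] by auto
  have G: "1 / (real (Suc q) * (r t i j - d0)^(Suc q)) \<le> 4 * E0"
    using G_bound(1)[OF t ij] unfolding G0_def by (simp add: q)
  have "1 / (r t i j - d0)^(Suc (Suc q)) \<le> (real (Suc q) * (4 * E0))^2 * d1^q"
    by (rule sing_bound[OF _ _ G]) (use rb d0 in auto)
  moreover have "(r t i j - d0)^(Suc (Suc q)) > 0" using rb by simp
  ultimately show ?thesis unfolding M0_def fsing_def by (simp add: q)
qed

lemma fs1: assumes t: "t \<ge> 0" and ij: "i \<noteq> j" shows "\<bar>fsing d1 \<theta> (r t i j)\<bar> \<le> M0"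
proof -
  define q where "q = \<theta> - 2"
  have q: "\<theta> = Suc (Suc q)" using th_eq q_def by simp
  have rb: "d0 < r t i j" "r t i j < d1" using r_bounds[OF t ij] by auto
  have G: "1 / (real (Suc q) * (d1 - r t i j)^(Suc q)) \<le> 4 * E0"
    using G_bound(2)[OF t ij] unfolding G1_def by (simp add: q)
  have "1 / (d1 - r t i j)^(Suc (Suc q)) \<le> (real (Suc q) * (4 * E0))^2 * d1^q"
    by (rule sing_bound[OF _ _ G]) (use rb d0 in auto)
  moreover have "(d1 - r t i j) ^ \<theta> = (r t i j - d1) ^ \<theta>"
    using theta(2) by (metis minus_diff_eq power_minus_even)
  moreover have "(d1 - r t i j)^(Suc (Suc q)) > 0" using rb by simp
  ultimately show ?thesis unfolding M0_def fsing_def by (simp add: q)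
qed

lemma xdiff_le: "t \<ge> 0 \<Longrightarrow> norm (x t i - x t j) \<le> sqrt d1"
proof -
  assume t: "t \<ge> 0"
  have "sqrt (r t i j) \<le> sqrt d1" by (rule real_sqrt_le_mono) (use r_le[OF t, of i j] in simp)
  then show "norm (x t i - x t j) \<le> sqrt d1" by simp
qed

lemma u_le_N: "norm (u t i) \<le> N t"
proof -
  have "(norm (u t i))\<^sup>2 \<le> (\<Sum>i\<in>UNIV. (norm (u t i))\<^sup>2)" by (rule member_le_sum) auto
  then have "sqrt ((norm (u t i))\<^sup>2) \<le> N t" unfolding N_def by (rule real_sqrt_le_mono)
  then show ?thesis by simp
qed

lemma M0_nonneg: "M0 \<ge> 0"
proof -
  obtain i :: 'k where True by simp
  have "card (UNIV - {i}) = CARD('k) - 1" by (simp add: card_Diff_singleton)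
  then have "card (UNIV - {i}) \<noteq> 0" using k2 by simp
  then have "UNIV - {i} \<noteq> {}" by (metis card.empty)
  then obtain j where "j \<in> UNIV - {i}" by blast
  then have "i \<noteq> j" by auto
  then show ?thesis using fs0[of 0 i j] by linarith
qed

lemma Ssum_bound:
  fixes f :: "'k \<Rightarrow> real" and y :: "'k \<Rightarrow> real ^ 'n"
  assumes t: "t \<ge> 0" and f: "\<And>j. j \<noteq> i \<Longrightarrow> \<bar>f j\<bar> \<le> M0" and y: "\<And>j. norm (y j) \<le> sqrt d1"
  shows "norm (\<Sum>j\<in>UNIV - {i}. f j *\<^sub>R y j) \<le> real CARD('k) * (M0 * sqrt d1)"
proof -
  have "norm (\<Sum>j\<in>UNIV - {i}. f j *\<^sub>R y j) \<le> (\<Sum>j\<in>UNIV - {i}. norm (f j *\<^sub>R y j))" by (rule norm_sum)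
  also have "\<dots> \<le> (\<Sum>j\<in>UNIV - {i}. M0 * sqrt d1)"
    by (intro sum_mono) (use f y in \<open>auto intro!: mult_mono M0_nonneg\<close>)
  also have "\<dots> = real (card (UNIV - {i})) * (M0 * sqrt d1)" by simp
  also have "\<dots> \<le> real CARD('k) * (M0 * sqrt d1)"
    using M0_nonneg d0 d01 by (intro mult_right_mono) (auto intro!: card_mono)
  finally show ?thesis .
qed

definition amax where "amax = K / (\<sigma>\<^sup>2) powr \<beta>"
lemma amax_nonneg: "amax \<ge> 0" unfolding amax_def using K by simp

definition Lw where "Lw = real CARD('k) * amax * (2 * E0) + 2 * (E0 * (real CARD('k) * (M0 * sqrt d1)))"

lemma w_bound: assumes t: "t \<ge> 0" shows "norm (w t i) \<le> Lw"
proof -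
  let ?S1 = "\<Sum>j\<in>UNIV. align_weight K \<sigma> \<beta> (x t i) (x t j) *\<^sub>R (v t j - v t i)"
  let ?S2 = "\<Sum>j\<in>UNIV - {i}. fsing d0 \<theta> (r t i j) *\<^sub>R (x t i - x t j)"
  let ?S3 = "\<Sum>j\<in>UNIV - {i}. fsing d1 \<theta> (r t i j) *\<^sub>R (x t j - x t i)"
  have L: "Lambda (v t) = N t" "N t \<le> E0" "N t \<ge> 0" using N_Lambda[OF t] N_bound[OF t] N_nonneg by auto
  have aw: "align_weight K \<sigma> \<beta> (x t i) (x t j) \<le> amax" for j
  proof -
    have "(\<sigma>\<^sup>2) powr \<beta> \<le> (\<sigma>\<^sup>2 + r t i j) powr \<beta>" using beta by (intro powr_mono2) auto
    moreover have "(\<sigma>\<^sup>2) powr \<beta> > 0" using sig by simp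
    ultimately show ?thesis unfolding align_weight_def amax_def using K
      by (intro divide_left_mono) (auto intro: mult_pos_pos)
  qed
  have aw0: "align_weight K \<sigma> \<beta> (x t i) (x t j) \<ge> 0" for j
    unfolding align_weight_def using K by simp
  have vd: "norm (v t j - v t i) \<le> 2 * E0" for j
  proof -
    have "norm (v t j - v t i) = norm (u t j - u t i)" unfolding u_def by simp
    also have "\<dots> \<le> norm (u t j) + norm (u t i)" by (rule norm_triangle_ineq4)
    also have "\<dots> \<le> 2 * E0" using u_le_N[of t j] u_le_N[of t i] L by linarith
    finally show ?thesis .
  qed
  have n1: "norm ?S1 \<le> real CARD('k) * amax * (2 * E0)"
  proof -
    have "norm ?S1 \<le> (\<Sum>j\<in>UNIV. norm (align_weight K \<sigma> \<beta> (x t i) (x t j) *\<^sub>R (v t j - v t i)))" by (rule norm_sum)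
    also have "\<dots> \<le> (\<Sum>j\<in>(UNIV::'k set). amax * (2 * E0))"
      by (intro sum_mono) (use aw aw0 vd amax_nonneg in \<open>auto intro!: mult_mono\<close>)
    finally show ?thesis by simp
  qed
  have n2: "norm (Lambda (v t) *\<^sub>R ?S2) \<le> E0 * (real CARD('k) * (M0 * sqrt d1))"
  proof -
    have "norm ?S2 \<le> real CARD('k) * (M0 * sqrt d1)"
      by (rule Ssum_bound[OF t]) (use fs0[OF t] xdiff_le[OF t] in auto)
    then show ?thesis using L by (simp add: mult_mono)
  qed
  have n3: "norm (Lambda (v t) *\<^sub>R ?S3) \<le> E0 * (real CARD('k) * (M0 * sqrt d1))"
  proof -
    have "norm ?S3 \<le> real CARD('k) * (M0 * sqrt d1)"
      by (rule Ssum_bound[OF t]) (use fs1[OF t] xdiff_le[OF t] in auto)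
    then show ?thesis using L by (simp add: mult_mono)
  qed
  have "norm (w t i) \<le> norm ?S1 + norm (Lambda (v t) *\<^sub>R ?S2) + norm (Lambda (v t) *\<^sub>R ?S3)"
    unfolding flock_rhs_def using norm_triangle_ineq[of "?S1 + Lambda (v t) *\<^sub>R ?S2" "Lambda (v t) *\<^sub>R ?S3"]
      norm_triangle_ineq[of ?S1 "Lambda (v t) *\<^sub>R ?S2"] by linarith
  then show ?thesis using n1 n2 n3 unfolding Lw_def by linarith
qed

end


context flock begin

lemma Lw_nonneg: "Lw \<ge> 0"
proof -
  have "norm (w 0 undefined) \<le> Lw" using w_bound[of 0 undefined] by simp
  then show ?thesis by (meson norm_ge_zero order_trans)
qed

lemma u_lip: assumes s: "s \<ge> 0" and t: "t \<ge> 0" shows "norm (u t i - u s i) \<le> Lw * \<bar>t - s\<bar>"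
proof -
  have "norm (u t i - u s i) \<le> Lw * norm (t - s)"
  proof (rule differentiable_bound[of "{0..}" "\<lambda>s. u s i" "\<lambda>t h. h *\<^sub>R w t i"])
    show "convex {0::real..}" by (rule convex_real_interval)
    fix y :: real assume y: "y \<in> {0..}"
    show "((\<lambda>s. u s i) has_derivative (\<lambda>h. h *\<^sub>R w y i)) (at y within {0..})"
      using du[of y i] y unfolding has_vector_derivative_def by simp
    have "onorm (\<lambda>h::real. h *\<^sub>R w y i) = onorm (\<lambda>h::real. h) * norm (w y i)"
      by (rule onorm_scaleR_left[OF bounded_linear_ident])
    then show "onorm (\<lambda>h::real. h *\<^sub>R w y i) \<le> Lw" using w_bound[of y i] y by (simp add: onorm_id)
  qed (use s t in auto)
  then show ?thesis by simp
qed

lemma N_integrable: "N integrable_on {0..}" using N_int_lim by simp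

lemma I_le_J: "T \<ge> 0 \<Longrightarrow> integral {0..T} N \<le> integral {0..} N"
  by (rule integral_subset_le)
     (auto intro!: N_integrable integrable_continuous_interval continuous_on_subset[OF cont_N] N_nonneg)

lemma I_mono: "0 \<le> a \<Longrightarrow> a \<le> b \<Longrightarrow> integral {0..a} N \<le> integral {0..b} N"
  by (rule integral_subset_le)
     (auto intro!: integrable_continuous_interval continuous_on_subset[OF cont_N] N_nonneg)

lemma u_conv: "((\<lambda>t. u t i) \<longlongrightarrow> 0) at_top"
proof -
  define L where "L = Lw + 1"
  have L: "L > 0" unfolding L_def using Lw_nonneg by simp
  define J where "J = integral {0..} N"
  have lim: "((\<lambda>k::nat. integral {0..real k} N) \<longlongrightarrow> J) sequentially" using N_int_lim unfolding J_def by simp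
  have "\<forall>e>0. eventually (\<lambda>t. norm (u t i) < e) at_top"
  proof (intro allI impI)
    fix e :: real assume e: "e > 0"
    define h where "h = e / (2 * L)"
    have h: "h > 0" unfolding h_def using e L by simp
    define \<delta> where "\<delta> = h * (e / 2)"
    have \<delta>: "\<delta> > 0" unfolding \<delta>_def using h e by simp
    obtain k :: nat where k: "norm (integral {0..real k} N - J) < \<delta>"
      using lim \<delta> unfolding LIMSEQ_iff by blast
    have "norm (u t i) < e" if t: "t \<ge> real k" for t
    proof (rule ccontr)
      assume "\<not> norm (u t i) < e"
      then have ut: "norm (u t i) \<ge> e" by simp
      have t0: "t \<ge> 0" using t by (meson of_nat_0_le_iff order_trans)
      have ge: "N s \<ge> e / 2" if s: "s \<in> {t..t+h}" for s
      proof -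
        have "norm (u s i - u t i) \<le> Lw * \<bar>s - t\<bar>" using u_lip[OF t0, of s i] s t0 by auto
        also have "\<dots> \<le> L * h" using s Lw_nonneg unfolding L_def by (intro mult_mono) auto
        also have "\<dots> = e / 2" unfolding h_def using L by simp
        finally have "norm (u s i - u t i) \<le> e / 2" .
        then have "norm (u s i) \<ge> e / 2" using ut norm_triangle_ineq2[of "u t i" "u s i"]
          by (simp add: norm_minus_commute)
        then show ?thesis using u_le_N[of s i] by linarith
      qed
      have intN: "N integrable_on {t..t+h}"
        using t0 by (intro integrable_continuous_interval continuous_on_subset[OF cont_N]) auto
      have "integral {t..t+h} (\<lambda>_. e / 2) \<le> integral {t..t+h} N"
        by (rule integral_le) (use intN ge in auto)
      moreover have "integral {t..t+h} (\<lambda>_. e / 2) = \<delta>" unfolding \<delta>_def using h by simp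
      ultimately have A1: "integral {t..t+h} N \<ge> \<delta>" by simp
      have "integral {0..t} N + integral {t..t+h} N = integral {0..t+h} N"
        by (rule Henstock_Kurzweil_Integration.integral_combine) (use t0 h in \<open>auto intro!: integrable_continuous_interval continuous_on_subset[OF cont_N]\<close>)
      moreover have "integral {0..t+h} N \<le> J" unfolding J_def using t0 h by (intro I_le_J) auto
      moreover have "integral {0..real k} N \<le> integral {0..t} N" using t by (intro I_mono) auto
      ultimately have "integral {0..real k} N + \<delta> \<le> J" using A1 by linarith
      then show False using k by (simp add: abs_if split: if_splits)
    qed
    then show "eventually (\<lambda>t. norm (u t i) < e) at_top"
      unfolding eventually_at_top_linorder by blast
  qed
  then have "((\<lambda>t. norm (u t i)) \<longlongrightarrow> 0) at_top"
    unfolding tendsto_iff by (simp add: dist_real_def)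
  then show ?thesis by (rule tendsto_norm_zero_cancel)
qed

end


theorem mainTheorem2:
  fixes x v :: "real \<Rightarrow> 'k::{finite,linorder} \<Rightarrow> real ^ 'n"
    and K \<sigma> d0 d1 \<beta> :: real and \<theta> :: nat
  assumes k2: "CARD('k) \<ge> 2"
    and K: "K > 0" and sig: "\<sigma> > 0" and d: "0 < d0" "d0 < d1"
    and beta: "0 < \<beta>" "\<beta> \<le> 1/2"
    and theta: "\<theta> > 0" "even \<theta>"
    and init: "\<And>i j. i \<noteq> j \<Longrightarrow> d0 < (norm (x 0 i - x 0 j))\<^sup>2 \<and> (norm (x 0 i - x 0 j))\<^sup>2 < d1"
    and defined: "\<And>t i j. t \<ge> 0 \<Longrightarrow> i \<noteq> j \<Longrightarrow>
                    (norm (x t i - x t j))\<^sup>2 \<noteq> d0 \<and> (norm (x t i - x t j))\<^sup>2 \<noteq> d1"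
    and dx: "\<And>t i. t \<ge> 0 \<Longrightarrow> ((\<lambda>s. x s i) has_vector_derivative v t i) (at t within {0..})"
    and dv: "\<And>t i. t \<ge> 0 \<Longrightarrow>
               ((\<lambda>s. v s i) has_vector_derivative flock_rhs K \<sigma> \<beta> d0 d1 \<theta> (x t) (v t) i)
                 (at t within {0..})"
  shows "(\<forall>t\<ge>0. avg (v t) = avg (v 0))
       \<and> (\<exists>B. \<forall>t\<ge>0. \<forall>i. norm (x t i - avg (x t)) \<le> B)
       \<and> (\<lambda>t. sqrt (\<Sum>i\<in>UNIV. (norm (v t i - avg (v 0)))\<^sup>2)) integrable_on {0..}
       \<and> (\<forall>i. ((\<lambda>t. v t i - avg (v 0)) \<longlongrightarrow> 0) at_top)"
proof -
  interpret F: flock x v K \<sigma> d0 d1 \<beta> \<theta>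
    using assms by unfold_locales auto
  have Neq: "(\<lambda>t. sqrt (\<Sum>i\<in>UNIV. (norm (v t i - avg (v 0)))\<^sup>2)) = F.N"
    by (rule ext) (simp add: F.N_def F.u_def)
  show ?thesis
  proof (intro conjI)
    show "\<forall>t\<ge>0. avg (v t) = avg (v 0)" using F.avg_const by blast
    show "\<exists>B. \<forall>t\<ge>0. \<forall>i. norm (x t i - avg (x t)) \<le> B" using F.x_bounded by blast
    show "(\<lambda>t. sqrt (\<Sum>i\<in>UNIV. (norm (v t i - avg (v 0)))\<^sup>2)) integrable_on {0..}"
      unfolding Neq by (rule F.N_integrable)
    show "\<forall>i. ((\<lambda>t. v t i - avg (v 0)) \<longlongrightarrow> 0) at_top"
      using F.u_conv unfolding F.u_def by blast
  qed
qed

end
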